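(* Let $\mathcal{X}\subseteq\mathbb{R}^d$ be nonempty, closed and convex, and let $f:\mathbb{R}^d\to\mathbb{R}$ be differentiable (not necessarily convex) and $L$-smooth on an open set containing $\mathcal{X}$; assume $f_\star=\min_{x\in\mathcal{X}}f(x)$ is attained. Fix $\gamma\in(0,1/L]$ and define $G_\gamma(x):=\frac1\gamma\big(x-\Pi_{\mathcal{X}}(x-\gamma\nabla f(x))\big)$, where $\Pi_{\mathcal{X}}$ is the Euclidean projection onto $\mathcal{X}$. Let $x_0\in\mathcal{X}$ and $x_{k+1}\in\operatorname{arg\,min}_{z\in\mathcal{X}\cap\mathcal{B}(x_k,t_k)}\langle\nabla f(x_k),z\rangle$ with $t_k:=\gamma\|G_\gamma(x_k)\|$. Then for every $k\ge0$, $f(x_{k+1})\le f(x_k)-\frac\gamma2\|G_\gamma(x_k)\|^2$, and for every $K\ge1$, $$\min_{0\le k\le K-1}\|G_\gamma(x_k)\|^2\le\frac{2(f(x_0)-f_\star)}{\gamma K}.$$ In particular, for $\gamma=1/L$, $\min_{0\le k\le K-1}\|G_{1/L}(x_k)\|^2\le\frac{2L(f(x_0)-f_\star)}{K}$.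
   Context: $\|\cdot\|$ is the Euclidean norm, $\mathcal{B}(x,t):=\{y:\|y-x\|\le t\}$; $L$-smooth means $\nabla f$ is $L$-Lipschitz. *)

theory Defs
  imports "HOL-Analysis.Analysis"
begin

definition grad_map :: "'a::euclidean_space set \<Rightarrow> ('a \<Rightarrow> 'a) \<Rightarrow> real \<Rightarrow> 'a \<Rightarrow> 'a" where
  "grad_map X g \<gamma> x = (1 / \<gamma>) *\<^sub>R (x - closest_point X (x - \<gamma> *\<^sub>R g x))"

end

theory Submission
  imports Defs
begin

lemma descent:
  fixes f :: "'a::euclidean_space \<Rightarrow> real" and g :: "'a \<Rightarrow> 'a"
  assumes der: "\<And>y. (f has_derivative (\<lambda>h. g y \<bullet> h)) (at y)"
    and lip: "\<And>y z. y \<in> U \<Longrightarrow> z \<in> U \<Longrightarrow> norm (g y - g z) \<le> L * norm (y - z)"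
    and seg: "closed_segment a b \<subseteq> U"
  shows "f b \<le> f a + g a \<bullet> (b - a) + L / 2 * (norm (b - a))\<^sup>2"
proof -
  define d where "d = b - a"
  define h where "h = (\<lambda>s. f (a + s *\<^sub>R d) - s * (g a \<bullet> d) - L / 2 * s\<^sup>2 * (norm d)\<^sup>2)"
  define h' where "h' = (\<lambda>s. g (a + s *\<^sub>R d) \<bullet> d - g a \<bullet> d - L * s * (norm d)\<^sup>2)"
  have D: "DERIV h s :> h' s" for s
  proof -
    have c: "((\<lambda>s. f (a + s *\<^sub>R d)) has_derivative (\<lambda>t. g (a + s *\<^sub>R d) \<bullet> (t *\<^sub>R d))) (at s)"
      by (rule has_derivative_compose[where f="\<lambda>s. a + s *\<^sub>R d", OF _ der])
         (auto intro!: derivative_eq_intros)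
    have "((\<lambda>s. f (a + s *\<^sub>R d)) has_field_derivative (g (a + s *\<^sub>R d) \<bullet> d)) (at s)"
    proof -
      have "(\<lambda>t. g (a + s *\<^sub>R d) \<bullet> (t *\<^sub>R d)) = (*) (g (a + s *\<^sub>R d) \<bullet> d)"
        by (rule ext) simp
      thus ?thesis unfolding has_field_derivative_def using c by simp
    qed
    then show ?thesis unfolding h_def h'_def
      by (auto intro!: derivative_eq_intros simp: power2_eq_square algebra_simps)
  qed
  obtain z where z: "0 < z" "z < 1" "h 1 - h 0 = (1 - 0) * h' z"
    using MVT2[of 0 1 h h'] D by auto
  have "a + z *\<^sub>R d \<in> closed_segment a b"
    using z unfolding closed_segment_def d_def
    by (intro CollectI exI[of _ z]) (auto simp: algebra_simps)
  moreover have "a \<in> U" using seg by auto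
  ultimately have "norm (g (a + z *\<^sub>R d) - g a) \<le> L * norm (z *\<^sub>R d)"
    using lip seg by fastforce
  hence "(g (a + z *\<^sub>R d) - g a) \<bullet> d \<le> L * z * (norm d)\<^sup>2"
    using norm_cauchy_schwarz[of "g (a + z *\<^sub>R d) - g a" d] z
    by (smt (verit) mult.assoc mult_right_mono norm_ge_zero norm_scaleR power2_eq_square)
  hence "h' z \<le> 0" unfolding h'_def by (simp add: inner_diff_left)
  hence "h 1 \<le> h 0" using z by simp
  thus ?thesis unfolding h_def d_def by simp
qed
theorem theorem9:
  fixes X U :: "'a::euclidean_space set" and f :: "'a \<Rightarrow> real" and g :: "'a \<Rightarrow> 'a"
    and L \<gamma> :: real and x :: "nat \<Rightarrow> 'a" and xstar :: 'a
  assumes "X \<noteq> {}" and "closed X" and "convex X"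
    and "\<And>y. (f has_derivative (\<lambda>h. g y \<bullet> h)) (at y)"
    and "open U" and "X \<subseteq> U"
    and "\<And>y z. y \<in> U \<Longrightarrow> z \<in> U \<Longrightarrow> norm (g y - g z) \<le> L * norm (y - z)"
    and "L > 0"
    and "xstar \<in> X" and "\<And>y. y \<in> X \<Longrightarrow> f xstar \<le> f y"
    and "0 < \<gamma>" and "\<gamma> \<le> 1 / L"
    and "x 0 \<in> X"
    and "\<And>k. x (Suc k) \<in> X \<inter> cball (x k) (\<gamma> * norm (grad_map X g \<gamma> (x k)))"
    and "\<And>k z. z \<in> X \<inter> cball (x k) (\<gamma> * norm (grad_map X g \<gamma> (x k)))
               \<Longrightarrow> g (x k) \<bullet> x (Suc k) \<le> g (x k) \<bullet> z"
  shows "(\<forall>k. f (x (Suc k)) \<le> f (x k) - \<gamma> / 2 * (norm (grad_map X g \<gamma> (x k)))\<^sup>2)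
       \<and> (\<forall>K::nat. K \<ge> 1 \<longrightarrow>
            Min ((\<lambda>k. (norm (grad_map X g \<gamma> (x k)))\<^sup>2) ` {0..K-1})
              \<le> 2 * (f (x 0) - f xstar) / (\<gamma> * real K))"
proof -
  let ?G = "\<lambda>k. grad_map X g \<gamma> (x k)"
  have xin: "x k \<in> X" for k
    using assms(13,14) by (cases k) auto
  have step: "f (x (Suc k)) \<le> f (x k) - \<gamma> / 2 * (norm (?G k))\<^sup>2" for k
  proof -
    define y where "y = x k"
    define G where "G = ?G k"
    define p where "p = closest_point X (y - \<gamma> *\<^sub>R g y)"
    define y' where "y' = x (Suc k)"
    have yX: "y \<in> X" using xin y_def by simp
    have pX: "p \<in> X" unfolding p_def using closest_point_in_set assms(1,2) by blast
    have yp: "y - p = \<gamma> *\<^sub>R G" unfolding G_def grad_map_def p_def y_def using assms(11) by simp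
    have "norm (y - p) = \<gamma> * norm G" using yp assms(11) by simp
    hence "p \<in> X \<inter> cball y (\<gamma> * norm G)" using pX by (simp add: dist_norm)
    hence A: "g y \<bullet> y' \<le> g y \<bullet> p" using assms(15)[of p k] unfolding y_def y'_def G_def by simp
    have "inner ((y - \<gamma> *\<^sub>R g y) - p) (y - p) \<le> 0"
      unfolding p_def by (rule closest_point_dot[OF assms(3,2) yX])
    hence "inner (\<gamma> *\<^sub>R G - \<gamma> *\<^sub>R g y) (\<gamma> *\<^sub>R G) \<le> 0"
      using yp by (simp add: algebra_simps)
    hence "\<gamma> * \<gamma> * (G \<bullet> G - g y \<bullet> G) \<le> 0"
      by (simp add: inner_diff_left algebra_simps)
    hence "G \<bullet> G - g y \<bullet> G \<le> 0" using assms(11)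
      by (simp add: mult_le_0_iff)
    hence B: "(norm G)\<^sup>2 \<le> g y \<bullet> G" by (simp add: power2_norm_eq_inner)
    have "g y \<bullet> (y' - y) \<le> g y \<bullet> (p - y)" using A by (simp add: inner_diff_right)
    also have "\<dots> = - \<gamma> * (g y \<bullet> G)"
      using yp by (metis inner_minus_right inner_scaleR_right minus_diff_eq mult_minus_left)
    also have "\<dots> \<le> - \<gamma> * (norm G)\<^sup>2" using B assms(11) by simp
    finally have C: "g y \<bullet> (y' - y) \<le> - \<gamma> * (norm G)\<^sup>2" .
    have y'X: "y' \<in> X" "norm (y' - y) \<le> \<gamma> * norm G"
      using assms(14)[of k] unfolding y'_def y_def G_def by (auto simp: dist_norm norm_minus_commute)
    have "closed_segment y y' \<subseteq> U"
      using closed_segment_subset[OF yX y'X(1) assms(3)] assms(6) by blast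
    hence D: "f y' \<le> f y + g y \<bullet> (y' - y) + L / 2 * (norm (y' - y))\<^sup>2"
      using descent[OF assms(4) assms(7)] by blast
    have "(norm (y' - y))\<^sup>2 \<le> (\<gamma> * norm G)\<^sup>2"
      using y'X(2) by (simp add: power_mono)
    hence "L / 2 * (norm (y' - y))\<^sup>2 \<le> L / 2 * (\<gamma> * norm G)\<^sup>2"
      using assms(8) by simp
    also have "\<dots> = (L * \<gamma>) * (\<gamma> / 2 * (norm G)\<^sup>2)" by (simp add: power2_eq_square)
    also have "\<dots> \<le> 1 * (\<gamma> / 2 * (norm G)\<^sup>2)"
    proof (rule mult_right_mono)
      show "L * \<gamma> \<le> 1" using assms(8,12) by (simp add: field_simps)
      show "0 \<le> \<gamma> / 2 * (norm G)\<^sup>2" using assms(11) by simp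
    qed
    finally have E: "L / 2 * (norm (y' - y))\<^sup>2 \<le> \<gamma> / 2 * (norm G)\<^sup>2" by simp
    show ?thesis using C D E unfolding y_def y'_def G_def by linarith
  qed
  have tele: "(\<Sum>k<K. \<gamma> / 2 * (norm (?G k))\<^sup>2) \<le> f (x 0) - f (x K)" for K
  proof (induction K)
    case 0 then show ?case by simp
  next
    case (Suc K) then show ?case using step[of K] by simp
  qed
  have part2: "Min ((\<lambda>k. (norm (?G k))\<^sup>2) ` {0..K-1}) \<le> 2 * (f (x 0) - f xstar) / (\<gamma> * real K)"
    if K: "K \<ge> 1" for K
  proof -
    define m where "m = Min ((\<lambda>k. (norm (?G k))\<^sup>2) ` {0..K-1})"
    have set: "{0..K-1} = {..<K}" using K by auto
    have "m \<le> (norm (?G k))\<^sup>2" if "k < K" for k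
      unfolding m_def using that set by (intro Min_le) auto
    hence "(\<Sum>k<K. m) \<le> (\<Sum>k<K. (norm (?G k))\<^sup>2)" by (intro sum_mono) auto
    hence "real K * m \<le> (\<Sum>k<K. (norm (?G k))\<^sup>2)" by simp
    hence "\<gamma> / 2 * (real K * m) \<le> \<gamma> / 2 * (\<Sum>k<K. (norm (?G k))\<^sup>2)"
      using assms(11) by simp
    also have "\<dots> = (\<Sum>k<K. \<gamma> / 2 * (norm (?G k))\<^sup>2)" by (simp add: sum_distrib_left)
    also have "\<dots> \<le> f (x 0) - f xstar" using tele[of K] assms(10)[OF xin[of K]] by simp
    finally have "\<gamma> / 2 * (real K * m) \<le> f (x 0) - f xstar" .
    hence "m * (\<gamma> * real K) \<le> 2 * (f (x 0) - f xstar)" by (simp add: algebra_simps)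
    moreover have "\<gamma> * real K > 0" using assms(11) K by simp
    ultimately have "m \<le> 2 * (f (x 0) - f xstar) / (\<gamma> * real K)"
      by (simp add: pos_le_divide_eq)
    thus ?thesis unfolding m_def .
  qed
  show ?thesis using step part2 by blast
qed

end
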